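(* Let $n \geq 1$ be a real number. Then for every complex number $z$ with $|z - 1/2| \leq 1/2$ we have $|z^n - 1| \geq |z - 1|$. Moreover, if $n > 1$ and $z \neq 0, 1$ (with $|z-1/2|\le 1/2$), then the inequality is strict: $|z^n - 1| > |z-1|$.
   Context: For real non-integer $n$, $z^n$ denotes the principal branch $z^n = e^{n \log z}$ with $\log$ the principal logarithm (argument in $(-\pi,\pi]$), and $0^n = 0$. *)

theory Defs
  imports "HOL-Analysis.Analysis"
begin

end

theory Submission
  imports Defs "HOL-Analysis.Analysis"
begin

lemma cos_lb2: fixes x :: real assumes "x \<ge> 0" shows "1 - x\<^sup>2/2 \<le> cos x"
proof -
  let ?f = "\<lambda>x. cos x - 1 + x\<^sup>2/2"
  have "\<And>u. \<lbrakk>0 \<le> u; u \<le> x\<rbrakk> \<Longrightarrow> \<exists>y. DERIV ?f u :> y \<and> y \<ge> 0"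
  proof -
    fix u :: real assume "0 \<le> u" "u \<le> x"
    have "DERIV ?f u :> u - sin u"
      by (auto intro!: derivative_eq_intros simp: power2_eq_square)
    moreover have "u - sin u \<ge> 0" using sin_x_le_x[OF \<open>0 \<le> u\<close>] by simp
    ultimately show "\<exists>y. DERIV ?f u :> y \<and> y \<ge> 0" by blast
  qed
  then have "?f x \<ge> ?f 0"
    by (rule DERIV_nonneg_imp_nondecreasing [OF assms])
  then show ?thesis by simp
qed

lemma sin_lb3: fixes x :: real assumes "x \<ge> 0" shows "x - x^3/6 \<le> sin x"
proof -
  let ?f = "\<lambda>x. sin x - x + x^3/6"
  have "\<And>u. \<lbrakk>0 \<le> u; u \<le> x\<rbrakk> \<Longrightarrow> \<exists>y. DERIV ?f u :> y \<and> y \<ge> 0"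
  proof -
    fix u :: real assume "0 \<le> u" "u \<le> x"
    have "DERIV ?f u :> cos u - 1 + u\<^sup>2/2"
      by (auto intro!: derivative_eq_intros simp: power2_eq_square)
    moreover have "cos u - 1 + u\<^sup>2/2 \<ge> 0" using cos_lb2[OF \<open>0 \<le> u\<close>] by simp
    ultimately show "\<exists>y. DERIV ?f u :> y \<and> y \<ge> 0" by blast
  qed
  then have "?f x \<ge> ?f 0"
    by (rule DERIV_nonneg_imp_nondecreasing [OF assms])
  then show ?thesis by simp
qed

lemma cos_ub4: fixes x :: real assumes "x \<ge> 0" shows "cos x \<le> 1 - x\<^sup>2/2 + x^4/24"
proof -
  let ?f = "\<lambda>x. 1 - x\<^sup>2/2 + x^4/24 - cos x"
  have "\<And>u. \<lbrakk>0 \<le> u; u \<le> x\<rbrakk> \<Longrightarrow> \<exists>y. DERIV ?f u :> y \<and> y \<ge> 0"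
  proof -
    fix u :: real assume "0 \<le> u" "u \<le> x"
    have "DERIV ?f u :> - u + u^3/6 + sin u"
      by (auto intro!: derivative_eq_intros simp: power2_eq_square power3_eq_cube field_simps)
    moreover have "- u + u^3/6 + sin u \<ge> 0" using sin_lb3[OF \<open>0 \<le> u\<close>] by simp
    ultimately show "\<exists>y. DERIV ?f u :> y \<and> y \<ge> 0" by blast
  qed
  then have "?f x \<ge> ?f 0"
    by (rule DERIV_nonneg_imp_nondecreasing [OF assms])
  then show ?thesis by simp
qed

lemma bern_powr: fixes y k :: real assumes "y > 0" "k \<ge> 1" shows "1 + k*(y-1) \<le> y powr k"
proof -
  have "(\<lambda>x. x powr k) y - (\<lambda>x. x powr k) 1 \<ge> k * (y - 1)"
    by (rule convex_on_imp_above_tangent[where A="{0<..}"])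
       (use assms in \<open>auto intro!: powr_convex derivative_eq_intros simp: interior_open\<close>)
  then show ?thesis by simp
qed

lemma angle_big:
  fixes n phi :: real
  assumes "0 \<le> phi" "phi < pi/2" "n \<ge> 1" "cos (n*phi) > cos phi"
  shows "(n+1)*phi > 2*pi"
proof (rule ccontr)
  assume "\<not> ?thesis"
  hence h: "n*phi \<le> 2*pi - phi" by (simp add: algebra_simps)
  have g: "phi \<le> n*phi" using mult_right_mono[of 1 n phi] assms by simp
  show False
  proof (cases "n*phi \<le> pi")
    case True
    then have "cos (n*phi) \<le> cos phi" using cos_monotone_0_pi_le[OF assms(1) g] by simp
    then show False using assms by simp
  next
    case False
    have "cos (n*phi) = cos (2*pi - n*phi)" by (simp add: cos_diff)
    also have "\<dots> \<le> cos phi" using False h by (intro cos_monotone_0_pi_le) (use assms in auto)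
    finally show False using assms by simp
  qed
qed

lemma key_small:
  fixes c d :: real
  assumes "0 < c" "c \<le> 1/2" "0 \<le> d" "d \<le> c\<^sup>2"
  shows "c*(1-d)\<^sup>2 > 2*d*(1-c)"
proof -
  have "c\<^sup>2 \<le> (1/2)\<^sup>2" using power_mono[of c "1/2" 2] assms by simp
  hence "1 - d \<ge> 3/4" using assms by (simp add: power2_eq_square)
  hence "(3/4)\<^sup>2 \<le> (1-d)\<^sup>2" using power_mono[of "3/4" "1-d" 2] by simp
  hence "(1-d)\<^sup>2 \<ge> 9/16" by (simp add: power2_eq_square)
  hence "c*(1-d)\<^sup>2 \<ge> c*(9/16)" using assms by (simp add: mult_left_mono)
  moreover have "2*d*(1-c) \<le> 2*c\<^sup>2*(1-c)" using assms by (simp add: mult_right_mono)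
  moreover have "2*c\<^sup>2*(1-c) < c*(9/16)"
  proof -
    have "0 \<le> (c - 1/2)\<^sup>2" by simp
    hence "2*c*(1-c) \<le> 1/2" by (simp add: power2_eq_square algebra_simps)
    hence "c*(2*c*(1-c)) \<le> c*(1/2)" using assms by (simp add: mult_left_mono)
    thus ?thesis using assms by (simp add: power2_eq_square algebra_simps)
  qed
  ultimately show ?thesis by linarith
qed

lemma key_big:
  fixes c d k a :: real
  assumes "0 < c" "c < 1" "a = 1 - c" "0 \<le> d" "d*(c + k*a) \<le> c" "k*a*(k-2) > 2" "k > 2"
  shows "c*(1-d)\<^sup>2 > 2*d*a"
proof -
  have a0: "a > 0" using assms by simp
  have P: "c + k*a > 0" using assms a0 by (simp add: add_pos_pos)
  have dle: "d \<le> c/(c+k*a)" using assms P by (simp add: field_simps)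
  have "1 - d \<ge> k*a/(c+k*a)" using dle P by (simp add: field_simps)
  moreover have "k*a/(c+k*a) \<ge> 0" using P a0 assms by simp
  ultimately have q: "(1-d)\<^sup>2 \<ge> (k*a/(c+k*a))\<^sup>2" by (simp add: power_mono)
  have "2*d*a \<le> 2*a*(c/(c+k*a))" using mult_left_mono[OF dle, of "2*a"] a0 by (simp add: mult_ac)
  also have "\<dots> < c*(k*a/(c+k*a))\<^sup>2"
  proof -
    have "k*a*(k-2) = k*k*a - 2*k*a" by (simp add: algebra_simps)
    hence kk: "k*k*a > 2*c + 2*k*a" using assms by linarith
    have ca: "c*a > 0" using assms a0 by simp
    have "(c*a)*(2*c + 2*k*a) < (c*a)*(k*k*a)" using mult_strict_left_mono[OF kk ca] .
    hence "2*a*c*(c+k*a) < c*(k*a)*(k*a)" by (simp add: algebra_simps)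
    hence "(2*a*c*(c+k*a))/(c+k*a)\<^sup>2 < (c*(k*a)*(k*a))/(c+k*a)\<^sup>2"
      using P by (intro divide_strict_right_mono) auto
    moreover have "2*a*(c/(c+k*a)) = (2*a*c*(c+k*a))/(c+k*a)\<^sup>2" using P by (simp add: power2_eq_square)
    moreover have "c*(k*a/(c+k*a))\<^sup>2 = (c*(k*a)*(k*a))/(c+k*a)\<^sup>2" by (simp add: power2_eq_square)
    ultimately show ?thesis by simp
  qed
  also have "\<dots> \<le> c*(1-d)\<^sup>2" using q assms by (simp add: mult_left_mono)
  finally show ?thesis .
qed

lemma est_big:
  fixes k phi a :: real
  assumes "0 < phi" "phi < pi/3" "k*phi > 2*pi - 2*phi" "a = 1 - cos phi"
  shows "k*a*(k-2) > 2"
proof -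
  have pi3: "pi > 3" using pi_gt3 .
  have pi4: "pi < 4" using pi_less_4 .
  have "phi < 4/3" using assms pi4 by simp
  hence "phi\<^sup>2 \<le> (4/3)\<^sup>2" using assms by (intro power_mono) auto
  hence ph2: "phi\<^sup>2 \<le> 16/9" by (simp add: power2_eq_square)
  have "cos phi \<le> 1 - phi\<^sup>2/2 + phi^4/24" using cos_ub4 assms by simp
  hence "a \<ge> phi\<^sup>2 * (1/2 - phi\<^sup>2/24)" using assms by (simp add: power2_eq_square power4_eq_xxxx algebra_simps)
  moreover have "phi\<^sup>2 * (2/5) \<le> phi\<^sup>2 * (1/2 - phi\<^sup>2/24)"
  proof -
    have "1/2 - phi\<^sup>2/24 \<ge> 2/5" using ph2 by simp
    thus ?thesis by (intro mult_left_mono) auto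
  qed
  ultimately have aa: "a \<ge> phi\<^sup>2 * (2/5)" by linarith
  define A where "A = k*phi"
  define B where "B = (k-2)*phi"
  have A: "A > 4*pi/3" using assms unfolding A_def by simp
  have B: "B > 2*pi/3" using assms unfolding B_def by (simp add: algebra_simps)
  have "A*B > (4*pi/3)*(2*pi/3)"
    using A B pi3 by (intro mult_strict_mono) auto
  moreover have "(4*pi/3)*(2*pi/3) > 8"
  proof -
    have "pi*pi > 3*3" using mult_strict_mono[of 3 pi 3 pi] pi3 by simp
    moreover have "(4*pi/3)*(2*pi/3) = 8*(pi*pi)/9" by simp
    ultimately show ?thesis by linarith
  qed
  ultimately have AB: "A*B > 8" by linarith
  have eq: "k*a*(k-2) * phi\<^sup>2 = a*(A*B)" unfolding A_def B_def by (simp add: power2_eq_square algebra_simps)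
  have ge: "a*(A*B) \<ge> (phi\<^sup>2*(2/5))*(A*B)" using mult_right_mono[OF aa, of "A*B"] AB by simp
  have gt: "(phi\<^sup>2*(2/5))*(A*B) > (phi\<^sup>2*(2/5))*8" using AB assms by simp
  have "phi\<^sup>2*(16/5) < phi\<^sup>2*(2/5)*(A*B)" using gt by simp
  hence "phi\<^sup>2*(16/5) < k*a*(k-2) * phi\<^sup>2" unfolding eq using ge by (rule less_le_trans)
  moreover have "2 * phi\<^sup>2 < phi\<^sup>2*(16/5)" using assms by simp
  ultimately have "k*a*(k-2) * phi\<^sup>2 > 2 * phi\<^sup>2" by linarith
  thus ?thesis using assms by simp
qed

lemma caseC:
  fixes r phi n :: real
  assumes r0: "0 < r" and rc: "r \<le> cos phi" and p0: "0 \<le> phi" and p2: "phi < pi/2" and n1: "n \<ge> 1"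
    and C: "cos (n*phi) > cos phi"
  shows "(r powr n)\<^sup>2 - 2*(r powr n)*cos (n*phi) > r\<^sup>2 - 2*r*cos phi"
proof -
  define c where "c = cos phi"
  define k where "k = n - 1"
  have ph0: "phi > 0" using C p0 by (cases "phi = 0") auto
  have c1: "c < 1" using cos_monotone_0_pi[of 0 phi] ph0 p2 unfolding c_def by simp
  have c0: "c > 0" using r0 rc unfolding c_def by simp
  have big: "(n+1)*phi > 2*pi" using angle_big[OF p0 p2 n1 C] .
  hence kp: "k*phi > 2*pi - 2*phi" unfolding k_def by (simp add: algebra_simps)
  have "k*phi > 2*phi" using kp p2 by simp
  hence k2: "k > 2" using ph0 by simp
  define d where "d = c powr k"
  have d0: "d > 0" using c0 unfolding d_def by simp
  have "d \<le> c powr 2" unfolding d_def using k2 c0 c1 by (intro powr_mono') auto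
  hence dc2: "d \<le> c\<^sup>2" using c0 by (simp add: powr_realpow[of c 2, simplified])
  have "c\<^sup>2 < 1" using c0 c1 by (simp add: power_less_one_iff abs_square_less_1)
  hence d1: "d < 1" using dc2 by simp
  define sv where "sv = r powr n"
  have "sv = r * r powr k" unfolding sv_def k_def using r0 powr_add[of r 1 "n-1"] by simp
  moreover have "r powr k \<le> d" unfolding d_def using k2 r0 rc c_def by (intro powr_mono2) auto
  ultimately have sd: "sv \<le> r*d" using r0 by simp
  have s0: "sv \<ge> 0" unfolding sv_def by simp
  have keyineq: "c*(1-d)\<^sup>2 > 2*d*(1-c)"
  proof (cases "c \<le> 1/2")
    case True
    then show ?thesis using key_small[OF c0 True _ dc2] d0 by simp
  next
    case False
    have php: "phi < pi/3"
    proof (rule ccontr)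
      assume "\<not> phi < pi/3"
      hence "cos phi \<le> cos (pi/3)" using p2 by (intro cos_monotone_0_pi_le) auto
      thus False using False unfolding c_def by (simp add: cos_60)
    qed
    have "1 + k*(1/c - 1) \<le> (1/c) powr k" using c0 k2 by (intro bern_powr) auto
    also have "(1/c) powr k = 1/d" unfolding d_def using c0 by (simp add: powr_divide)
    finally have "d*(1 + k*(1/c - 1)) \<le> 1" using d0 by (simp add: field_simps)
    hence "d*(c + k*(1-c)) \<le> c" using c0 by (simp add: field_simps)
    moreover have "k*(1-c)*(k-2) > 2" using est_big[OF ph0 php kp] unfolding c_def by simp
    ultimately show ?thesis using key_big[OF c0 c1 refl, of d k] d0 k2 by simp
  qed
  have E: "sv\<^sup>2 - 2* sv*cos (n*phi) - (r\<^sup>2 - 2*r*c) = (r-sv)*(2*c-r-sv) + 2* sv*(c - cos (n*phi))"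
    by (simp add: power2_eq_square algebra_simps)
  have "2* sv*(c - cos (n*phi)) \<ge> 2* sv*(c - 1)" using s0 by (simp add: mult_left_mono)
  moreover have "(r-sv)*(2*c-r-sv) \<ge> (r*(1-d))*(c*(1-d))"
  proof -
    have "r*d \<le> c*d" using rc d0 unfolding c_def by (simp add: mult_right_mono)
    hence h2: "c*(1-d) \<le> 2*c-r-sv" using sd rc unfolding c_def by (simp add: algebra_simps)
    have h1: "r*(1-d) \<le> r-sv" using sd by (simp add: algebra_simps)
    have "r*(1-d) \<ge> 0" "c*(1-d) \<ge> 0" using d1 r0 c0 by auto
    thus ?thesis using h1 h2 by (intro mult_mono) auto
  qed
  moreover have "2* sv*(1-c) \<le> 2*(r*d)*(1-c)" using sd c1 by (simp add: mult_right_mono)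
  moreover have "r*(c*(1-d)\<^sup>2) > r*(2*d*(1-c))" using keyineq r0 by simp
  ultimately have "sv\<^sup>2 - 2* sv*cos (n*phi) - (r\<^sup>2 - 2*r*c) > 0"
    unfolding E by (simp add: power2_eq_square algebra_simps)
  thus ?thesis unfolding sv_def c_def by simp
qed

lemma real_ineq:
  fixes r phi n :: real
  assumes r0: "0 < r" and rc: "r \<le> cos phi" and p0: "0 \<le> phi" and p2: "phi < pi/2" and n1: "n \<ge> 1"
  shows "(r powr n)\<^sup>2 - 2*(r powr n)*cos (n*phi) \<ge> r\<^sup>2 - 2*r*cos phi"
    and "n > 1 \<Longrightarrow> r < 1 \<Longrightarrow> (r powr n)\<^sup>2 - 2*(r powr n)*cos (n*phi) > r\<^sup>2 - 2*r*cos phi"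
proof -
  define c where "c = cos phi"
  define sv where "sv = r powr n"
  have r1: "r \<le> 1" using rc cos_le_one[of phi] by linarith
  have svr: "sv \<le> r" unfolding sv_def using powr_mono'[of 1 n r] n1 r0 r1 by simp
  have s0: "sv \<ge> 0" unfolding sv_def by simp
  have E: "sv\<^sup>2 - 2 * sv * cos (n*phi) - (r\<^sup>2 - 2*r*c) = (r-sv)*(2*c-r-sv) + 2 * sv * (c - cos (n*phi))"
    by (simp add: power2_eq_square algebra_simps)
  have P1: "(r-sv)*(2*c-r-sv) \<ge> 0" using svr rc unfolding c_def by simp
  have main: "sv\<^sup>2 - 2 * sv * cos (n*phi) \<ge> r\<^sup>2 - 2*r*c \<and>
     (n > 1 \<longrightarrow> r < 1 \<longrightarrow> sv\<^sup>2 - 2 * sv * cos (n*phi) > r\<^sup>2 - 2*r*c)"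
  proof (cases "cos (n*phi) \<le> cos phi")
    case True
    have P2: "2 * sv * (c - cos (n*phi)) \<ge> 0" using True s0 unfolding c_def by simp
    have "n > 1 \<longrightarrow> r < 1 \<longrightarrow> (r-sv)*(2*c-r-sv) > 0"
    proof (intro impI)
      assume "n > 1" "r < 1"
      hence "sv < r" unfolding sv_def using powr_less_mono'[of r 1 n] r0 by simp
      moreover have "2*c-r-sv > 0" using \<open>sv < r\<close> rc unfolding c_def by simp
      ultimately show "(r-sv)*(2*c-r-sv) > 0" by simp
    qed
    then show ?thesis using E P1 P2 by linarith
  next
    case False
    then show ?thesis using caseC[OF r0 rc p0 p2 n1] unfolding sv_def c_def by simp
  qed
  then show "(r powr n)\<^sup>2 - 2*(r powr n)*cos (n*phi) \<ge> r\<^sup>2 - 2*r*cos phi"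
    and "n > 1 \<Longrightarrow> r < 1 \<Longrightarrow> (r powr n)\<^sup>2 - 2*(r powr n)*cos (n*phi) > r\<^sup>2 - 2*r*cos phi"
    unfolding sv_def c_def by auto
qed

lemma cmod_minus_real_sq: "(cmod (u - of_real a))\<^sup>2 = (cmod u)\<^sup>2 - 2*a*Re u + a\<^sup>2"
  by (simp only: cmod_power2) (simp add: power2_eq_square algebra_simps)

lemma complex_setup:
  fixes z :: complex and n :: real
  assumes z0: "z \<noteq> 0"
  shows "(cmod (z powr (of_real n) - 1))\<^sup>2 = ((cmod z) powr n)\<^sup>2 - 2*((cmod z) powr n)*cos (n * Arg z) + 1"
    and "(cmod (z - 1))\<^sup>2 = (cmod z)\<^sup>2 - 2*(cmod z)*cos (Arg z) + 1"
    and "(cmod (z - 1/2))\<^sup>2 = (cmod z)\<^sup>2 - (cmod z)*cos (Arg z) + 1/4"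
proof -
  have Rez: "Re z = cmod z * cos (Arg z)" using rcis_cmod_Arg[of z]
    by (metis Re_rcis)
  have Ln: "Ln z = Complex (ln (cmod z)) (Arg z)" using z0
    by (simp add: complex_eq_iff Arg_eq_Im_Ln)
  define w where "w = of_real n * Ln z"
  have w: "Re w = n * ln (cmod z)" "Im w = n * Arg z" unfolding w_def Ln by simp_all
  have zp: "z powr (of_real n) = exp w" unfolding w_def using z0 by (simp add: powr_def)
  have nm: "cmod (exp w) = (cmod z) powr n" using z0 w by (simp add: powr_def)
  have re: "Re (exp w) = (cmod z) powr n * cos (n * Arg z)" using z0 w by (simp add: Re_exp powr_def)
  show "(cmod (z powr (of_real n) - 1))\<^sup>2 = ((cmod z) powr n)\<^sup>2 - 2*((cmod z) powr n)*cos (n * Arg z) + 1"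
    using cmod_minus_real_sq[of "exp w" 1] unfolding zp nm re by simp
  show "(cmod (z - 1))\<^sup>2 = (cmod z)\<^sup>2 - 2*(cmod z)*cos (Arg z) + 1"
    using cmod_minus_real_sq[of z 1] Rez by simp
  show "(cmod (z - 1/2))\<^sup>2 = (cmod z)\<^sup>2 - (cmod z)*cos (Arg z) + 1/4"
    using cmod_minus_real_sq[of z "1/2"] Rez by (simp add: power2_eq_square)
qed

lemma nonzero_case:
  fixes z :: complex and n :: real
  assumes z0: "z \<noteq> 0" and D: "cmod (z - 1/2) \<le> 1/2" and n1: "n \<ge> 1"
  shows "cmod (z powr (of_real n) - 1) \<ge> cmod (z - 1)"
    and "n > 1 \<Longrightarrow> z \<noteq> 1 \<Longrightarrow> cmod (z powr (of_real n) - 1) > cmod (z - 1)"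
proof -
  define r where "r = cmod z"
  define th where "th = Arg z"
  define phi where "phi = \<bar>th\<bar>"
  have r0: "r > 0" using z0 unfolding r_def by simp
  have "(cmod (z - 1/2))\<^sup>2 \<le> (1/2)\<^sup>2" using D by (intro power_mono) auto
  hence "r\<^sup>2 - r*cos th \<le> 0" using complex_setup(3)[OF z0] unfolding r_def th_def by (simp add: power2_eq_square)
  hence "r*r \<le> r*cos th" by (simp add: power2_eq_square)
  hence rc: "r \<le> cos th" using r0 by simp
  have cphi: "cos phi = cos th" unfolding phi_def by simp
  have cn: "cos (n*phi) = cos (n*th)"
  proof -
    have "n*phi = \<bar>n*th\<bar>" unfolding phi_def using n1 by (simp add: abs_mult)
    thus ?thesis by simp
  qed
  have p0: "0 \<le> phi" unfolding phi_def by simp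
  have ppi: "phi \<le> pi" unfolding phi_def th_def using Arg_le_pi[of z] mpi_less_Arg[of z] by (simp add: abs_le_iff)
  have p2: "phi < pi/2"
  proof (rule ccontr)
    assume "\<not> phi < pi/2"
    hence "cos phi \<le> cos (pi/2)" using ppi by (intro cos_monotone_0_pi_le) auto
    hence "cos th \<le> 0" using cphi by simp
    thus False using rc r0 by linarith
  qed
  have rc': "r \<le> cos phi" using rc cphi by simp
  have Ea: "(cmod (z powr (of_real n) - 1))\<^sup>2 = (r powr n)\<^sup>2 - 2*(r powr n)*cos (n*phi) + 1"
    using complex_setup(1)[OF z0, of n] cn unfolding r_def th_def by simp
  have Eb: "(cmod (z - 1))\<^sup>2 = r\<^sup>2 - 2*r*cos phi + 1"
    using complex_setup(2)[OF z0] cphi unfolding r_def th_def by simp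
  show "cmod (z powr (of_real n) - 1) \<ge> cmod (z - 1)"
  proof (rule power2_le_imp_le)
    show "(cmod (z - 1))\<^sup>2 \<le> (cmod (z powr (of_real n) - 1))\<^sup>2"
      unfolding Ea Eb using real_ineq(1)[OF r0 rc' p0 p2 n1] by linarith
  qed simp
  assume n1': "n > 1" and z1: "z \<noteq> 1"
  have r1: "r < 1"
  proof (rule ccontr)
    assume "\<not> r < 1"
    moreover have "r \<le> 1" using rc cos_le_one[of th] by linarith
    ultimately have "r = 1" by simp
    hence "cos th = 1" using rc cos_le_one[of th] by linarith
    have "Re z = r * cos th" unfolding r_def th_def by (metis Re_rcis rcis_cmod_Arg)
    hence Rez: "Re z = 1" using \<open>r = 1\<close> \<open>cos th = 1\<close> by simp
    have "(cmod z)\<^sup>2 = (Re z)\<^sup>2 + (Im z)\<^sup>2" by (rule cmod_power2)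
    hence "(Im z)\<^sup>2 = 0" using Rez \<open>r = 1\<close> unfolding r_def by simp
    hence "Im z = 0" by simp
    hence "z = 1" using Rez by (simp add: complex_eq_iff)
    thus False using z1 by simp
  qed
  show "cmod (z powr (of_real n) - 1) > cmod (z - 1)"
  proof (rule power2_less_imp_less)
    show "(cmod (z - 1))\<^sup>2 < (cmod (z powr (of_real n) - 1))\<^sup>2"
      unfolding Ea Eb using real_ineq(2)[OF r0 rc' p0 p2 n1 n1' r1] by linarith
  qed simp
qed

theorem mainTheorem1:
  fixes n :: real
  assumes "n \<ge> 1"
  shows "(\<forall>z::complex. cmod (z - 1/2) \<le> 1/2 \<longrightarrow>
            cmod (z powr (of_real n) - 1) \<ge> cmod (z - 1))
       \<and> (n > 1 \<longrightarrow> (\<forall>z::complex. cmod (z - 1/2) \<le> 1/2 \<and> z \<noteq> 0 \<and> z \<noteq> 1 \<longrightarrow>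
            cmod (z powr (of_real n) - 1) > cmod (z - 1)))"
proof (intro conjI allI impI)
  fix z :: complex assume D: "cmod (z - 1/2) \<le> 1/2"
  show "cmod (z powr (of_real n) - 1) \<ge> cmod (z - 1)"
  proof (cases "z = 0")
    case True then show ?thesis by (simp add: powr_def)
  next
    case False then show ?thesis using nonzero_case(1)[OF False D assms] by simp
  qed
next
  fix z :: complex assume n1: "n > 1" and H: "cmod (z - 1/2) \<le> 1/2 \<and> z \<noteq> 0 \<and> z \<noteq> 1"
  then show "cmod (z powr (of_real n) - 1) > cmod (z - 1)"
    using nonzero_case(2)[of z n] assms by blast
qed

end
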